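(* Let $P$ be a Poisson bracket on $\mathbb{R}^n$, let $\ast_\nu$ be a star-product on $(\mathbb{R}^n,P)$, and let $\rho=\sum_{r\ge0}\nu^r\rho_r$, $\rho_r:\mathsf{Pol}\to\mathsf{N}$, be the cochains of the associated sun-product. Then for every $r\ge1$, $\rho_r$ is the restriction to $\mathsf{Pol}$ of a differential operator on $\mathsf{N}$ (vanishing on constants).
   Context: $\mathsf{N}=C^\infty(\mathbb{R}^n)$, coordinates $x_1,\dots,x_n$, $\mathsf{Pol}=\mathbb{R}[x_1,\dots,x_n]$. A (differential) star-product on $(\mathbb{R}^n,P)$ is a bilinear map $f\ast_\nu g=\sum_{r\ge0}\nu^rC_r(f,g)$ from $\mathsf{N}\times\mathsf{N}$ to $\mathsf{N}[[\nu]]$, extended $\mathbb{R}[[\nu]]$-bilinearly to $\mathsf{N}[[\nu]]$, where the $C_r$ are bidifferential operators with: $C_0(f,g)=fg$; $C_r(c,f)=C_r(f,c)=0$ for $r\ge1$ and constants $c$; associativity $\sum_{s+t=r}C_s(C_t(f,g),h)=\sum_{s+t=r}C_s(f,C_t(g,h))$ for all $r\ge0$; and $C_1(f,g)-C_1(g,f)=2P(f,g)$. The cochains of the associated sun-product are the $\mathbb{R}$-linear maps $\rho_r:\mathsf{Pol}\to\mathsf{N}$ determined by $\rho(1)=1$ and, for every monomial, $\rho(x_{i_1}\cdots x_{i_k})=\frac1{k!}\sum_{\sigma\in S_k}x_{i_{\sigma(1)}}\ast_\nu\cdots\ast_\nu x_{i_{\sigma(k)}}=\sum_{r\ge0}\nu^r\rho_r(x_{i_1}\cdots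 x_{i_k})$ ($k\ge1$); then $\rho_0$ is the identity and the sun-product is $f\odot_\nu g=\rho(\pi(fg))$ where $\pi$ takes the $\nu^0$-coefficient. *)

theory Defs
  imports "HOL-Analysis.Analysis"
begin

type_synonym 'n fn = "real ^ 'n \<Rightarrow> real"

definition pd :: "'n::finite \<Rightarrow> 'n fn \<Rightarrow> 'n fn" where
  "pd i f x = deriv (\<lambda>t. f (x + t *\<^sub>R axis i 1)) 0"

fun iter_pd :: "'n::finite list \<Rightarrow> 'n fn \<Rightarrow> 'n fn" where
  "iter_pd [] f = f"
| "iter_pd (i # is) f = pd i (iter_pd is f)"

definition smooth :: "'n::finite fn \<Rightarrow> bool" where
  "smooth f \<longleftrightarrow> (\<forall>is. continuous_on UNIV (iter_pd is f)) \<and>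
     (\<forall>is i x. (\<lambda>t. iter_pd is f (x + t *\<^sub>R axis i 1)) differentiable (at 0))"

definition diff_op :: "('n::finite fn \<Rightarrow> 'n fn) \<Rightarrow> bool" where
  "diff_op D \<longleftrightarrow> (\<exists>S a. finite S \<and> (\<forall>is\<in>S. smooth (a is)) \<and>
     (\<forall>f. smooth f \<longrightarrow> D f = (\<lambda>x. \<Sum>is\<in>S. a is x * iter_pd is f x)))"

definition bidiff_op :: "('n::finite fn \<Rightarrow> 'n fn \<Rightarrow> 'n fn) \<Rightarrow> bool" where
  "bidiff_op B \<longleftrightarrow> (\<exists>S a. finite S \<and> (\<forall>p\<in>S. smooth (a p)) \<and>
     (\<forall>f g. smooth f \<longrightarrow> smooth g \<longrightarrow>
        B f g = (\<lambda>x. \<Sum>p\<in>S. a p x * iter_pd (fst p) f x * iter_pd (snd p) g x)))"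

definition poisson_bracket :: "('n::finite fn \<Rightarrow> 'n fn \<Rightarrow> 'n fn) \<Rightarrow> bool" where
  "poisson_bracket P \<longleftrightarrow> (\<exists>\<pi>. (\<forall>i j. smooth (\<pi> i j)) \<and> (\<forall>i j x. \<pi> i j x = - \<pi> j i x) \<and>
     (\<forall>f g. smooth f \<longrightarrow> smooth g \<longrightarrow>
        P f g = (\<lambda>x. \<Sum>i\<in>UNIV. \<Sum>j\<in>UNIV. \<pi> i j x * pd i f x * pd j g x)) \<and>
     (\<forall>f g h. smooth f \<longrightarrow> smooth g \<longrightarrow> smooth h \<longrightarrow>
        (\<forall>x. P f (P g h) x + P g (P h f) x + P h (P f g) x = 0)))"

definition star_product :: "('n::finite fn \<Rightarrow> 'n fn \<Rightarrow> 'n fn) \<Rightarrow> (nat \<Rightarrow> 'n fn \<Rightarrow> 'n fn \<Rightarrow> 'n fn) \<Rightarrow> bool" where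
  "star_product P C \<longleftrightarrow>
     (\<forall>r. bidiff_op (C r)) \<and>
     (\<forall>f g. smooth f \<longrightarrow> smooth g \<longrightarrow> C 0 f g = (\<lambda>x. f x * g x)) \<and>
     (\<forall>r c f. r \<ge> 1 \<longrightarrow> smooth f \<longrightarrow> C r (\<lambda>x. c) f = (\<lambda>x. 0) \<and> C r f (\<lambda>x. c) = (\<lambda>x. 0)) \<and>
     (\<forall>r f g h. smooth f \<longrightarrow> smooth g \<longrightarrow> smooth h \<longrightarrow>
        (\<lambda>x. \<Sum>s\<le>r. C s (C (r - s) f g) h x) = (\<lambda>x. \<Sum>s\<le>r. C s f (C (r - s) g h) x)) \<and>
     (\<forall>f g. smooth f \<longrightarrow> smooth g \<longrightarrow> (\<lambda>x. C 1 f g x - C 1 g f x) = (\<lambda>x. 2 * P f g x))"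

text \<open>Formal power series in nu with coefficients in N: sequences nat => N.\<close>
definition star :: "(nat \<Rightarrow> 'n::finite fn \<Rightarrow> 'n fn \<Rightarrow> 'n fn) \<Rightarrow> (nat \<Rightarrow> 'n fn) \<Rightarrow> (nat \<Rightarrow> 'n fn) \<Rightarrow> nat \<Rightarrow> 'n fn" where
  "star C F G r = (\<lambda>x. \<Sum>s\<le>r. \<Sum>t\<le>r - s. C s (F t) (G (r - s - t)) x)"

definition one_series :: "nat \<Rightarrow> 'n::finite fn" where
  "one_series r = (if r = 0 then (\<lambda>x. 1) else (\<lambda>x. 0))"

definition coord_series :: "'n::finite \<Rightarrow> nat \<Rightarrow> 'n fn" where
  "coord_series i r = (if r = 0 then (\<lambda>x. x $ i) else (\<lambda>x. 0))"

fun star_list :: "(nat \<Rightarrow> 'n::finite fn \<Rightarrow> 'n fn \<Rightarrow> 'n fn) \<Rightarrow> (nat \<Rightarrow> 'n fn) list \<Rightarrow> nat \<Rightarrow> 'n fn" where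
  "star_list C [] = one_series"
| "star_list C (F # Fs) = star C F (star_list C Fs)"

definition mono :: "'n::finite list \<Rightarrow> 'n fn" where
  "mono xs = (\<lambda>x. prod_list (map (\<lambda>i. x $ i) xs))"

text \<open>nu^r-coefficient of rho on a monomial (symmetrised star product; rho(1)=1).\<close>
definition rho_mono :: "(nat \<Rightarrow> 'n::finite fn \<Rightarrow> 'n fn \<Rightarrow> 'n fn) \<Rightarrow> 'n list \<Rightarrow> nat \<Rightarrow> 'n fn" where
  "rho_mono C xs r = (\<lambda>x. (1 / fact (length xs)) *
      (\<Sum>\<sigma> | \<sigma> permutes {..<length xs}.
          star_list C (map (\<lambda>j. coord_series (xs ! \<sigma> j)) [0..<length xs]) r x))"

end

theory Submission
  imports Defs "HOL-Combinatorics.Multiset_Permutations"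
begin


definition adiff :: "'n::finite fn \<Rightarrow> bool" where
  "adiff h \<longleftrightarrow> (\<forall>i x. (\<lambda>t. h (x + t *\<^sub>R axis i 1)) differentiable (at 0))"

lemma smooth_iff: "smooth f \<longleftrightarrow> (\<forall>is. continuous_on UNIV (iter_pd is f) \<and> adiff (iter_pd is f))"
  unfolding smooth_def adiff_def by blast

lemma adiff_DERIV: "adiff h \<Longrightarrow> ((\<lambda>t. h (x + t *\<^sub>R axis i 1)) has_field_derivative pd i h x) (at 0)"
  unfolding adiff_def pd_def using DERIV_deriv_iff_real_differentiable by blast

lemma pd_lin:
  assumes "\<And>t. t \<in> T \<Longrightarrow> adiff (h t)"
  shows "pd j (\<lambda>x. \<Sum>t\<in>T. c t * h t x) = (\<lambda>x. \<Sum>t\<in>T. c t * pd j (h t) x)"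
proof
  fix x
  have "((\<lambda>s. \<Sum>t\<in>T. c t * h t (x + s *\<^sub>R axis j 1)) has_field_derivative (\<Sum>t\<in>T. c t * pd j (h t) x)) (at 0)"
    by (rule DERIV_sum, rule DERIV_cmult, rule adiff_DERIV, rule assms)
  then show "pd j (\<lambda>x. \<Sum>t\<in>T. c t * h t x) x = (\<Sum>t\<in>T. c t * pd j (h t) x)"
    unfolding pd_def by (rule DERIV_imp_deriv)
qed

lemma pd_mult:
  assumes "adiff u" "adiff v"
  shows "pd j (\<lambda>x. u x * v x) = (\<lambda>x. pd j u x * v x + u x * pd j v x)"
proof
  fix x
  have "((\<lambda>s. u (x + s *\<^sub>R axis j 1) * v (x + s *\<^sub>R axis j 1)) has_field_derivative
     (pd j u x * v (x + 0 *\<^sub>R axis j 1) + pd j v x * u (x + 0 *\<^sub>R axis j 1))) (at 0)"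
    by (rule DERIV_mult, rule adiff_DERIV[OF assms(1)], rule adiff_DERIV[OF assms(2)])
  then show "pd j (\<lambda>x. u x * v x) x = pd j u x * v x + u x * pd j v x"
    unfolding pd_def by (subst DERIV_imp_deriv, assumption, simp add: mult.commute)
qed

lemma adiff_mult: "adiff u \<Longrightarrow> adiff v \<Longrightarrow> adiff (\<lambda>x. u x * v x)"
  unfolding adiff_def by (auto intro: differentiable_mult)

lemma adiff_lin: "(\<And>t. t \<in> T \<Longrightarrow> adiff (h t)) \<Longrightarrow> adiff (\<lambda>x. \<Sum>t\<in>T. c t * h t x)"
  unfolding adiff_def
  by (cases "finite T") (auto intro!: differentiable_sum differentiable_mult)

lemma pd_const [simp]: "pd j (\<lambda>x. c) = (\<lambda>x. 0)"
  unfolding pd_def by simp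

lemma iter_pd_const: "iter_pd is (\<lambda>x. c) = (if is = [] then (\<lambda>x. c) else (\<lambda>x. 0))"
  by (induction "is") auto

lemma iter_pd_zero [simp]: "iter_pd is (\<lambda>x. 0) = (\<lambda>x. 0)"
  by (induction "is") auto

lemma iter_pd_append: "iter_pd (xs @ ys) f = iter_pd xs (iter_pd ys f)"
  by (induction xs) auto

lemma pd_coord: "pd i (\<lambda>x. x $ j) = (\<lambda>x. if j = i then 1 else 0)"
proof
  fix x
  have "((\<lambda>t. (x + t *\<^sub>R axis i 1) $ j) has_field_derivative (if j = i then 1 else 0)) (at 0)"
    by (auto simp: axis_def intro!: derivative_eq_intros)
  then show "pd i (\<lambda>x. x $ j) x = (if j = i then 1 else 0)"
    unfolding pd_def by (rule DERIV_imp_deriv)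
qed

lemma smooth_const [simp]: "smooth (\<lambda>x. c)"
  unfolding smooth_iff adiff_def by (auto simp: iter_pd_const)

lemma smooth_coord [simp]: "smooth (\<lambda>x. x $ j)"
proof -
  have "\<forall>is. iter_pd is (\<lambda>x. x $ j) = (\<lambda>x. x $ j) \<or> (\<exists>c. iter_pd is (\<lambda>x. x $ j) = (\<lambda>x. c))"
  proof
    fix "is" :: "'a list"
    show "iter_pd is (\<lambda>x. x $ j) = (\<lambda>x. x $ j) \<or> (\<exists>c. iter_pd is (\<lambda>x. x $ j) = (\<lambda>x. c))"
    proof (induction "is")
      case (Cons i js)
      then show ?case
      proof
        assume "iter_pd js (\<lambda>x. x $ j) = (\<lambda>x. x $ j)"
        then show ?thesis by (simp add: pd_coord) (metis (full_types))
      next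
        assume "\<exists>c. iter_pd js (\<lambda>x. x $ j) = (\<lambda>x. c)"
        then show ?thesis by auto
      qed
    qed auto
  qed
  moreover have "continuous_on UNIV (\<lambda>x::real^'a. x $ j)"
    by (intro continuous_intros)
  moreover have "adiff (\<lambda>x::real^'a. x $ j)"
    unfolding adiff_def by (auto intro!: derivative_intros)
  moreover have "adiff (\<lambda>x::real^'a. c)" for c
    unfolding adiff_def by auto
  ultimately show ?thesis unfolding smooth_iff
    by (metis continuous_on_const)
qed

lemma smooth_iter_pd: "smooth f \<Longrightarrow> smooth (iter_pd is f)"
  unfolding smooth_iff by (metis iter_pd_append)

lemma smooth_pd: "smooth f \<Longrightarrow> smooth (pd i f)"
  using smooth_iter_pd[of f "[i]"] by simp

lemma smooth_adiff: "smooth f \<Longrightarrow> adiff f"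
  unfolding smooth_iff by (metis iter_pd.simps(1))

lemma smooth_cont: "smooth f \<Longrightarrow> continuous_on UNIV f"
  unfolding smooth_iff by (metis iter_pd.simps(1))

lemma iter_pd_lin:
  assumes "\<And>t. t \<in> T \<Longrightarrow> smooth (h t)"
  shows "iter_pd is (\<lambda>x. \<Sum>t\<in>T. c t * h t x) = (\<lambda>x. \<Sum>t\<in>T. c t * iter_pd is (h t) x)"
proof (induction "is")
  case (Cons i js)
  show ?case using assms
    by (simp add: Cons pd_lin smooth_adiff smooth_iter_pd)
qed simp

lemma smooth_lin:
  assumes "\<And>t. t \<in> T \<Longrightarrow> smooth (h t)"
  shows "smooth (\<lambda>x. \<Sum>t\<in>T. c t * h t x)"
proof -
  have "continuous_on UNIV (iter_pd is (\<lambda>x. \<Sum>t\<in>T. c t * h t x)) \<and> adiff (iter_pd is (\<lambda>x. \<Sum>t\<in>T. c t * h t x))" for "is"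
    using assms
    apply (subst (1 2) iter_pd_lin, assumption)+
    by (intro conjI continuous_on_sum continuous_on_mult continuous_on_const adiff_lin)
       (auto intro: smooth_cont smooth_adiff smooth_iter_pd)
  then show ?thesis unfolding smooth_iff by blast
qed

lemma pd_add:
  assumes "adiff a" "adiff b"
  shows "pd i (\<lambda>x. a x + b x) = (\<lambda>x. pd i a x + pd i b x)"
proof
  fix x
  have "((\<lambda>s. a (x + s *\<^sub>R axis i 1) + b (x + s *\<^sub>R axis i 1)) has_field_derivative (pd i a x + pd i b x)) (at 0)"
    by (rule DERIV_add, rule adiff_DERIV[OF assms(1)], rule adiff_DERIV[OF assms(2)])
  then show "pd i (\<lambda>x. a x + b x) x = pd i a x + pd i b x"
    unfolding pd_def by (rule DERIV_imp_deriv)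
qed

lemma adiff_add: "adiff a \<Longrightarrow> adiff b \<Longrightarrow> adiff (\<lambda>x. a x + b x)"
  unfolding adiff_def by (auto intro: differentiable_add)

inductive psum :: "'n::finite fn \<Rightarrow> bool" where
  psum0: "psum (\<lambda>x. 0)"
| psumS: "smooth u \<Longrightarrow> smooth v \<Longrightarrow> psum h \<Longrightarrow> psum (\<lambda>x. u x * v x + h x)"

lemma psum_props: "psum h \<Longrightarrow> adiff h \<and> continuous_on UNIV h \<and> psum (pd i h)"
proof (induction rule: psum.induct)
  case psum0
  then show ?case by (auto simp: adiff_def intro: psum.psum0)
next
  case (psumS u v h)
  have au: "adiff u" "adiff v" using psumS smooth_adiff by auto
  have "pd i (\<lambda>x. u x * v x + h x) = (\<lambda>x. pd i u x * v x + (u x * pd i v x + pd i h x))"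
    using au psumS by (simp add: pd_add adiff_mult pd_mult algebra_simps)
  moreover have "psum (\<lambda>x. u x * pd i v x + pd i h x)"
    by (rule psum.psumS) (use psumS smooth_pd in auto)
  then have X: "psum (\<lambda>x. pd i u x * v x + (u x * pd i v x + pd i h x))"
    by (rule psum.psumS[rotated 2]) (use psumS smooth_pd in auto)
  moreover have "adiff (\<lambda>x. u x * v x + h x)" using au psumS by (intro adiff_add adiff_mult) auto
  moreover have "continuous_on UNIV (\<lambda>x. u x * v x + h x)" using psumS
    by (intro continuous_on_add continuous_on_mult smooth_cont[of u] smooth_cont[of v]) auto
  ultimately show ?case using X by simp
qed

lemma smooth_mult:
  assumes "smooth f" "smooth g"
  shows "smooth (\<lambda>x. f x * g x)"
proof -
  have p: "psum (\<lambda>x. f x * g x)"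
    using psum.psumS[OF assms psum.psum0] by simp
  have "psum (iter_pd is (\<lambda>x. f x * g x))" for "is"
    by (induction "is") (use p psum_props in auto)
  then show ?thesis unfolding smooth_iff using psum_props by blast
qed

lemma smooth_add:
  assumes "smooth f" "smooth g"
  shows "smooth (\<lambda>x. f x + g x)"
  using smooth_lin[of "{True,False}" "\<lambda>b. if b then f else g" "\<lambda>_. 1"] assms by simp

lemma smooth_sum:
  assumes "\<And>t. t \<in> T \<Longrightarrow> smooth (h t)"
  shows "smooth (\<lambda>x. \<Sum>t\<in>T. h t x)"
  using smooth_lin[of T h "\<lambda>_. 1"] assms by simp

lemma smooth_prod:
  assumes "\<And>t. t \<in> T \<Longrightarrow> smooth (h t)"
  shows "smooth (\<lambda>x. \<Prod>t\<in>T. h t x)"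
  using assms
proof (induction T rule: infinite_finite_induct)
  case (insert t T)
  then show ?case using smooth_mult[of "h t" "\<lambda>x. \<Prod>t\<in>T. h t x"] by simp
qed auto

lemma smooth_cmult: "smooth f \<Longrightarrow> smooth (\<lambda>x. c * f x)"
  using smooth_mult[of "\<lambda>x. c" f] by simp


lemma diff_op_cong: "diff_op A \<Longrightarrow> (\<And>f. smooth f \<Longrightarrow> B f = A f) \<Longrightarrow> diff_op B"
  unfolding diff_op_def by metis

lemma diff_op_single: "smooth c \<Longrightarrow> diff_op (\<lambda>f x. c x * iter_pd is f x)"
  unfolding diff_op_def by (intro exI[of _ "{is}"] exI[of _ "\<lambda>_. c"]) auto

lemma diff_op_zero: "diff_op (\<lambda>f x. 0)"
  unfolding diff_op_def by (intro exI[of _ "{}"]) auto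

lemma diff_op_id: "diff_op (\<lambda>f. f)"
  using diff_op_single[of "\<lambda>x. 1" "[]"] by simp

lemma diff_op_pd: "diff_op (pd j)"
  using diff_op_single[of "\<lambda>x. 1" "[j]"] by simp

lemma smooth_zero [simp]: "smooth (\<lambda>x. 0)" using smooth_const[of 0] .

lemma smooth_if0: "(P \<Longrightarrow> smooth f) \<Longrightarrow> smooth (\<lambda>x. if P then f x else 0)"
  by (cases P) auto

lemma diff_op_add:
  assumes "diff_op A" "diff_op B"
  shows "diff_op (\<lambda>f x. A f x + B f x)"
proof -
  obtain S a where A: "finite S" "\<forall>is\<in>S. smooth (a is)"
    "\<forall>f. smooth f \<longrightarrow> A f = (\<lambda>x. \<Sum>is\<in>S. a is x * iter_pd is f x)"
    using assms(1) unfolding diff_op_def by blast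
  obtain T b where B: "finite T" "\<forall>is\<in>T. smooth (b is)"
    "\<forall>f. smooth f \<longrightarrow> B f = (\<lambda>x. \<Sum>is\<in>T. b is x * iter_pd is f x)"
    using assms(2) unfolding diff_op_def by blast
  define c where "c is = (\<lambda>x. (if is \<in> S then a is x else 0) + (if is \<in> T then b is x else 0))" for "is"
  have "smooth (c is)" if "is \<in> S \<union> T" for "is"
    unfolding c_def using A B by (auto intro!: smooth_add smooth_if0)
  moreover have "A f x + B f x = (\<Sum>is\<in>S \<union> T. c is x * iter_pd is f x)" if "smooth f" for f x
  proof -
    have "(\<Sum>is\<in>S \<union> T. c is x * iter_pd is f x) =
      (\<Sum>is\<in>S \<union> T. (if is \<in> S then a is x * iter_pd is f x else 0)) +
      (\<Sum>is\<in>S \<union> T. (if is \<in> T then b is x * iter_pd is f x else 0))"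
      unfolding c_def sum.distrib[symmetric] by (intro sum.cong refl) (auto simp: distrib_right)
    also have "\<dots> = (\<Sum>is\<in>S. a is x * iter_pd is f x) + (\<Sum>is\<in>T. b is x * iter_pd is f x)"
      using A(1) B(1) by (simp add: sum.If_cases Int_absorb1 Int_absorb2)
    finally show ?thesis using A(3) B(3) that by simp
  qed
  ultimately show ?thesis unfolding diff_op_def using A(1) B(1)
    by (intro exI[of _ "S \<union> T"] exI[of _ c]) auto
qed

lemma diff_op_sum:
  assumes "\<And>t. t \<in> T \<Longrightarrow> diff_op (A t)"
  shows "diff_op (\<lambda>f x. \<Sum>t\<in>T. A t f x)"
  using assms
proof (induction T rule: infinite_finite_induct)
  case (infinite A)
  then show ?case using diff_op_zero by simp
next
  case empty
  then show ?case using diff_op_zero by simp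
next
  case (insert t T)
  then show ?case using diff_op_add[of "A t" "\<lambda>f x. \<Sum>t\<in>T. A t f x"] by simp
qed

lemma diff_op_mult:
  assumes "smooth c" "diff_op A"
  shows "diff_op (\<lambda>f x. c x * A f x)"
proof -
  obtain S a where A: "finite S" "\<forall>is\<in>S. smooth (a is)"
    "\<forall>f. smooth f \<longrightarrow> A f = (\<lambda>x. \<Sum>is\<in>S. a is x * iter_pd is f x)"
    using assms(2) unfolding diff_op_def by blast
  show ?thesis unfolding diff_op_def using A assms(1)
    by (intro exI[of _ S] exI[of _ "\<lambda>is x. c x * a is x"])
       (auto intro!: smooth_mult simp: sum_distrib_left mult.assoc)
qed

lemma diff_op_smooth:
  assumes "diff_op A" "smooth f"
  shows "smooth (A f)"
proof -
  obtain S a where A: "finite S" "\<forall>is\<in>S. smooth (a is)"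
    "\<forall>f. smooth f \<longrightarrow> A f = (\<lambda>x. \<Sum>is\<in>S. a is x * iter_pd is f x)"
    using assms(1) unfolding diff_op_def by blast
  show ?thesis using A assms(2)
    by (auto intro!: smooth_sum smooth_mult smooth_iter_pd)
qed

lemma diff_op_lin:
  assumes "diff_op A" "\<And>t. t \<in> T \<Longrightarrow> smooth (h t)"
  shows "A (\<lambda>x. \<Sum>t\<in>T. c t * h t x) = (\<lambda>x. \<Sum>t\<in>T. c t * A (h t) x)"
proof -
  obtain S a where A: "finite S" "\<forall>is\<in>S. smooth (a is)"
    "\<forall>f. smooth f \<longrightarrow> A f = (\<lambda>x. \<Sum>is\<in>S. a is x * iter_pd is f x)"
    using assms(1) unfolding diff_op_def by blast
  have sm: "smooth (\<lambda>x. \<Sum>t\<in>T. c t * h t x)" by (rule smooth_lin, rule assms(2))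
  show ?thesis
    using A(3) assms(2) sm
    by (simp add: iter_pd_lin[OF assms(2)] sum_distrib_left sum.swap[of _ S] mult_ac)
qed

lemma diff_op_lin2:
  assumes "diff_op A" "smooth f" "smooth g"
  shows "A (\<lambda>x. f x + g x) = (\<lambda>x. A f x + A g x)"
  using diff_op_lin[OF assms(1), of "{True,False}" "\<lambda>b. if b then f else g" "\<lambda>_. 1"] assms by simp

lemma diff_op_cmult:
  assumes "diff_op A" "smooth f"
  shows "A (\<lambda>x. c * f x) = (\<lambda>x. c * A f x)"
  using diff_op_lin[OF assms(1), of "{()}" "\<lambda>_. f" "\<lambda>_. c"] assms by simp

lemma diff_op_pdcomp:
  assumes "diff_op A"
  shows "diff_op (\<lambda>f. pd j (A f))"
proof -
  obtain S a where A: "finite S" "\<forall>is\<in>S. smooth (a is)"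
    "\<forall>f. smooth f \<longrightarrow> A f = (\<lambda>x. \<Sum>is\<in>S. a is x * iter_pd is f x)"
    using assms(1) unfolding diff_op_def by blast
  have "diff_op (\<lambda>f x. \<Sum>is\<in>S. (pd j (a is) x * iter_pd is f x + a is x * iter_pd (j # is) f x))"
    using A(2) by (intro diff_op_sum diff_op_add diff_op_single smooth_pd) auto
  moreover have "pd j (A f) = (\<lambda>x. \<Sum>is\<in>S. (pd j (a is) x * iter_pd is f x + a is x * iter_pd (j # is) f x))"
    if "smooth f" for f
  proof -
    have "pd j (A f) = pd j (\<lambda>x. \<Sum>is\<in>S. 1 * (a is x * iter_pd is f x))"
      using A(3) that by simp
    also have "\<dots> = (\<lambda>x. \<Sum>is\<in>S. 1 * pd j (\<lambda>x. a is x * iter_pd is f x) x)"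
      using A(2) that by (intro pd_lin adiff_mult smooth_adiff smooth_iter_pd) auto
    also have "\<dots> = (\<lambda>x. \<Sum>is\<in>S. (pd j (a is) x * iter_pd is f x + a is x * iter_pd (j # is) f x))"
      using A(2) that by (intro ext sum.cong refl) (simp add: pd_mult smooth_adiff smooth_iter_pd)
    finally show ?thesis .
  qed
  ultimately show ?thesis by (rule diff_op_cong)
qed

lemma diff_op_iterpdcomp:
  assumes "diff_op A"
  shows "diff_op (\<lambda>f. iter_pd is (A f))"
  by (induction "is") (auto simp: assms intro: diff_op_pdcomp[where A="\<lambda>f. iter_pd _ (A f)"])

lemma diff_op_comp:
  assumes "diff_op A" "diff_op D"
  shows "diff_op (\<lambda>f. A (D f))"
proof -
  obtain S a where A: "finite S" "\<forall>is\<in>S. smooth (a is)"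
    "\<forall>f. smooth f \<longrightarrow> A f = (\<lambda>x. \<Sum>is\<in>S. a is x * iter_pd is f x)"
    using assms(1) unfolding diff_op_def by blast
  have "diff_op (\<lambda>f x. \<Sum>is\<in>S. a is x * iter_pd is (D f) x)"
    using A(2) by (intro diff_op_sum diff_op_mult diff_op_iterpdcomp assms(2)) auto
  then show ?thesis
    by (rule diff_op_cong) (use A(3) diff_op_smooth[OF assms(2)] in auto)
qed



definition mon :: "(nat \<Rightarrow> 'n::finite) \<Rightarrow> nat set \<Rightarrow> 'n fn" where
  "mon g I = (\<lambda>x. \<Prod>i\<in>I. x $ g i)"

lemma smooth_mon [simp]: "smooth (mon g I)"
  unfolding mon_def by (rule smooth_prod) simp

lemma adiff_mon [simp]: "adiff (mon g I)"
  by (rule smooth_adiff) simp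

lemma mon_remove: "finite I \<Longrightarrow> i \<in> I \<Longrightarrow> x $ g i * mon g (I - {i}) x = mon g I x"
  unfolding mon_def by (simp add: prod.remove)

lemma pd_mon:
  assumes "finite I"
  shows "pd j (mon g I) = (\<lambda>x. \<Sum>i\<in>I. (if g i = j then 1 else 0) * mon g (I - {i}) x)"
  using assms
proof (induction I rule: finite_induct)
  case empty
  then show ?case by (simp add: mon_def)
next
  case (insert a I)
  have m: "mon g (insert a I) = (\<lambda>x. x $ g a * mon g I x)"
    using insert unfolding mon_def by auto
  have m2: "mon g (insert a I - {i}) x = x $ g a * mon g (I - {i}) x" if "i \<in> I" for i x
  proof -
    have "insert a I - {i} = insert a (I - {i})" using insert(2) that by auto
    then show ?thesis using insert(1,2) unfolding mon_def by simp
  qed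
  have "pd j (mon g (insert a I)) = (\<lambda>x. pd j (\<lambda>x. x $ g a) x * mon g I x + x $ g a * pd j (mon g I) x)"
    unfolding m by (rule pd_mult) (auto intro: smooth_adiff)
  also have "\<dots> = (\<lambda>x. (if g a = j then 1 else 0) * mon g I x + (\<Sum>i\<in>I. (if g i = j then 1 else 0) * mon g (insert a I - {i}) x))"
    unfolding insert.IH pd_coord using m2 by (auto simp: sum_distrib_left mult_ac intro!: sum.cong)
  also have "\<dots> = (\<lambda>x. \<Sum>i\<in>insert a I. (if g i = j then 1 else 0) * mon g (insert a I - {i}) x)"
    using insert(1,2) by (simp add: Diff_insert_absorb)
  finally show ?case .
qed

lemma pd_pd_mon:
  assumes "finite I"
  shows "pd a (pd b (mon g I)) = pd b (pd a (mon g I))"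
proof -
  define Q where "Q b a = (\<lambda>x. \<Sum>i\<in>I. \<Sum>i'\<in>I. (if i' \<noteq> i then (if g i = b then 1 else 0) *
       ((if g i' = a then 1 else 0) * mon g (I - {i} - {i'}) x) else 0))" for b a
  have e: "pd a (pd b (mon g I)) = Q b a" for a b
  proof -
    have "pd a (pd b (mon g I)) = (\<lambda>x. \<Sum>i\<in>I. (if g i = b then 1 else 0) * pd a (mon g (I - {i})) x)"
      unfolding pd_mon[OF assms] by (rule pd_lin) simp
    also have "\<dots> = Q b a"
      unfolding Q_def using assms
      by (intro ext sum.cong refl)
         (simp add: pd_mon sum_distrib_left sum.inter_filter[symmetric] Diff_eq Int_def conj_commute)
    finally show ?thesis .
  qed
  have "Q b a = Q a b"
    unfolding Q_def
    by (subst sum.swap) (intro ext sum.cong refl, auto simp: Diff_insert2[symmetric] insert_commute)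
  then show ?thesis using e by simp
qed

lemma iter_pd_pd_mon:
  "finite I \<Longrightarrow> iter_pd \<alpha> (pd j (mon g I)) = pd j (iter_pd \<alpha> (mon g I))"
proof (induction \<alpha> arbitrary: I rule: rev_induct)
  case Nil
  then show ?case by simp
next
  case (snoc \<beta> \<alpha>)
  let ?c = "\<lambda>i. if g i = \<beta> then 1 else (0::real)"
  have "iter_pd (\<alpha> @ [\<beta>]) (pd j (mon g I)) = iter_pd \<alpha> (pd j (pd \<beta> (mon g I)))"
    using pd_pd_mon[OF snoc.prems, of \<beta> j g] by (simp add: iter_pd_append)
  also have "\<dots> = iter_pd \<alpha> (pd j (\<lambda>x. \<Sum>i\<in>I. ?c i * mon g (I - {i}) x))"
    by (simp add: pd_mon snoc.prems)
  also have "\<dots> = iter_pd \<alpha> (\<lambda>x. \<Sum>i\<in>I. ?c i * pd j (mon g (I - {i})) x)"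
    by (subst pd_lin) auto
  also have "\<dots> = (\<lambda>x. \<Sum>i\<in>I. ?c i * iter_pd \<alpha> (pd j (mon g (I - {i}))) x)"
    by (rule iter_pd_lin) (simp add: smooth_pd)
  also have "\<dots> = (\<lambda>x. \<Sum>i\<in>I. ?c i * pd j (iter_pd \<alpha> (mon g (I - {i}))) x)"
    using snoc.prems by (simp add: snoc.IH)
  also have "\<dots> = pd j (\<lambda>x. \<Sum>i\<in>I. ?c i * iter_pd \<alpha> (mon g (I - {i})) x)"
    by (rule pd_lin[symmetric]) (simp add: smooth_adiff smooth_iter_pd)
  also have "\<dots> = pd j (iter_pd \<alpha> (\<lambda>x. \<Sum>i\<in>I. ?c i * mon g (I - {i}) x))"
    by (subst iter_pd_lin) auto
  also have "\<dots> = pd j (iter_pd (\<alpha> @ [\<beta>]) (mon g I))"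
    by (simp add: iter_pd_append pd_mon snoc.prems)
  finally show ?case .
qed

lemma pd_diff:
  assumes "adiff a" "adiff b"
  shows "pd i (\<lambda>x. a x - b x) = (\<lambda>x. pd i a x - pd i b x)"
proof
  fix x
  have "((\<lambda>s. a (x + s *\<^sub>R axis i 1) - b (x + s *\<^sub>R axis i 1)) has_field_derivative (pd i a x - pd i b x)) (at 0)"
    by (rule DERIV_diff, rule adiff_DERIV[OF assms(1)], rule adiff_DERIV[OF assms(2)])
  then show "pd i (\<lambda>x. a x - b x) x = pd i a x - pd i b x"
    unfolding pd_def by (rule DERIV_imp_deriv)
qed

lemma euler_mon:
  assumes "finite I"
  shows "(\<lambda>x. real (card I) * iter_pd \<alpha> (mon g I) x - (\<Sum>i\<in>I. x $ g i * iter_pd \<alpha> (mon g (I - {i})) x))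
       = (\<lambda>x. real (length \<alpha>) * iter_pd \<alpha> (mon g I) x)"
proof (induction \<alpha>)
  case Nil
  have "(\<Sum>i\<in>I. x $ g i * mon g (I - {i}) x) = real (card I) * mon g I x" for x
    using assms by (simp add: mon_remove)
  then show ?case by simp
next
  case (Cons j \<alpha>)
  let ?F = "iter_pd \<alpha> (mon g I)"
  let ?G = "\<lambda>i. iter_pd \<alpha> (mon g (I - {i}))"
  have sF: "smooth ?F" and sG: "\<And>i. smooth (?G i)" by (auto intro: smooth_iter_pd)
  have sP: "smooth (\<lambda>x. x $ g i * ?G i x)" for i by (intro smooth_mult sG) simp
  have key: "(\<Sum>i\<in>I. (if g i = j then 1 else 0) * ?G i x) = pd j ?F x" for x
  proof -
    have "(\<lambda>x. \<Sum>i\<in>I. (if g i = j then 1 else 0) * ?G i x) =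
       iter_pd \<alpha> (\<lambda>x. \<Sum>i\<in>I. (if g i = j then 1 else 0) * mon g (I - {i}) x)"
      by (rule iter_pd_lin[symmetric]) simp
    also have "\<dots> = iter_pd \<alpha> (pd j (mon g I))"
      by (simp only: pd_mon[OF assms])
    also have "\<dots> = pd j ?F"
      by (rule iter_pd_pd_mon[OF assms])
    finally show ?thesis by (rule fun_cong)
  qed
  have "pd j (\<lambda>x. real (card I) * ?F x - (\<Sum>i\<in>I. x $ g i * ?G i x))
     = (\<lambda>x. real (card I) * pd j ?F x - (\<Sum>i\<in>I. 1 * pd j (\<lambda>x. x $ g i * ?G i x) x))"
  proof -
    have "pd j (\<lambda>x. real (card I) * ?F x - (\<Sum>i\<in>I. x $ g i * ?G i x)) =
        (\<lambda>x. pd j (\<lambda>x. real (card I) * ?F x) x - pd j (\<lambda>x. \<Sum>i\<in>I. 1 * (x $ g i * ?G i x)) x)"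
      by (simp add: pd_diff smooth_adiff smooth_cmult sF smooth_sum sP)
    also have "\<dots> = (\<lambda>x. real (card I) * pd j ?F x - (\<Sum>i\<in>I. 1 * pd j (\<lambda>x. x $ g i * ?G i x) x))"
      using pd_lin[of "{()}" "\<lambda>_. ?F" j "\<lambda>_. real (card I)"] pd_lin[of I "\<lambda>i x. x $ g i * ?G i x" j "\<lambda>_. 1"]
      by (simp add: smooth_adiff sF sP)
    finally show ?thesis .
  qed
  also have "\<dots> = (\<lambda>x. real (card I) * pd j ?F x - (\<Sum>i\<in>I. (if g i = j then 1 else 0) * ?G i x + x $ g i * pd j (?G i) x))"
    by (intro ext arg_cong2[where f="(-)"] refl sum.cong)
       (simp add: pd_mult smooth_adiff sG pd_coord)
  also have "\<dots> = (\<lambda>x. real (card I) * pd j ?F x - pd j ?F x - (\<Sum>i\<in>I. x $ g i * pd j (?G i) x))"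
    by (simp add: sum.distrib key diff_diff_eq)
  finally have A: "pd j (\<lambda>x. real (card I) * ?F x - (\<Sum>i\<in>I. x $ g i * ?G i x)) =
     (\<lambda>x. real (card I) * pd j ?F x - pd j ?F x - (\<Sum>i\<in>I. x $ g i * pd j (?G i) x))" .
  have B: "pd j (\<lambda>x. real (length \<alpha>) * ?F x) = (\<lambda>x. real (length \<alpha>) * pd j ?F x)"
    using pd_lin[of "{()}" "\<lambda>_. ?F" j "\<lambda>_. real (length \<alpha>)"] by (simp add: smooth_adiff sF)
  have "(\<lambda>x. real (card I) * pd j ?F x - pd j ?F x - (\<Sum>i\<in>I. x $ g i * pd j (?G i) x))
      = (\<lambda>x. real (length \<alpha>) * pd j ?F x)"
    using A B Cons.IH by simp
  then show ?case by (simp add: algebra_simps fun_eq_iff)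
qed



lemma bidiff_rep:
  assumes "bidiff_op B"
  obtains S a where "finite S" "\<forall>p\<in>S. smooth (a p)"
    "\<And>f g. smooth f \<Longrightarrow> smooth g \<Longrightarrow> B f g = (\<lambda>x. \<Sum>p\<in>S. a p x * iter_pd (fst p) f x * iter_pd (snd p) g x)"
  using assms unfolding bidiff_op_def by blast

lemma bidiff_smooth:
  assumes "bidiff_op B" "smooth f" "smooth g"
  shows "smooth (B f g)"
proof -
  obtain S a where r: "finite S" "\<forall>p\<in>S. smooth (a p)"
    "\<forall>f g. smooth f \<longrightarrow> smooth g \<longrightarrow> B f g = (\<lambda>x. \<Sum>p\<in>S. a p x * iter_pd (fst p) f x * iter_pd (snd p) g x)"
    using assms(1) unfolding bidiff_op_def by blast
  show ?thesis using r assms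
    by (auto intro!: smooth_sum smooth_mult smooth_iter_pd)
qed

lemma bidiff_zero_left:
  assumes "bidiff_op B" "smooth g"
  shows "B (\<lambda>x. 0) g = (\<lambda>x. 0)"
proof -
  obtain S a where r: "finite S" "\<forall>p\<in>S. smooth (a p)"
    "\<forall>f g. smooth f \<longrightarrow> smooth g \<longrightarrow> B f g = (\<lambda>x. \<Sum>p\<in>S. a p x * iter_pd (fst p) f x * iter_pd (snd p) g x)"
    using assms(1) unfolding bidiff_op_def by blast
  show ?thesis using r assms by simp
qed

lemma bidiff_left_diff_op:
  assumes "bidiff_op B" "smooth f"
  shows "diff_op (\<lambda>h. B f h)"
proof -
  obtain S a where r: "finite S" "\<forall>p\<in>S. smooth (a p)"
    "\<forall>f g. smooth f \<longrightarrow> smooth g \<longrightarrow> B f g = (\<lambda>x. \<Sum>p\<in>S. a p x * iter_pd (fst p) f x * iter_pd (snd p) g x)"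
    using assms(1) unfolding bidiff_op_def by blast
  have "diff_op (\<lambda>h x. \<Sum>p\<in>S. (a p x * iter_pd (fst p) f x) * iter_pd (snd p) h x)"
  proof (rule diff_op_sum)
    fix p assume "p \<in> S"
    then have "smooth (\<lambda>x. a p x * iter_pd (fst p) f x)"
      using r(2) assms(2) smooth_mult[of "a p" "iter_pd (fst p) f"] smooth_iter_pd by blast
    then show "diff_op (\<lambda>h x. (a p x * iter_pd (fst p) f x) * iter_pd (snd p) h x)"
      by (rule diff_op_single)
  qed
  then show ?thesis by (rule diff_op_cong) (use r(3) assms(2) in simp)
qed

lemma smooth_coord_series [simp]: "smooth (coord_series j t)"
  unfolding coord_series_def by auto

lemma smooth_one_series [simp]: "smooth (one_series t)"
  unfolding one_series_def by auto

definition W :: "(nat \<Rightarrow> 'n::finite fn \<Rightarrow> 'n fn \<Rightarrow> 'n fn) \<Rightarrow> nat \<Rightarrow> 'n list \<Rightarrow> 'n fn" where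
  "W C r ys = star_list C (map coord_series ys) r"

definition Ssum :: "(nat \<Rightarrow> 'n::finite fn \<Rightarrow> 'n fn \<Rightarrow> 'n fn) \<Rightarrow> nat \<Rightarrow> (nat \<Rightarrow> 'n) \<Rightarrow> nat set \<Rightarrow> 'n fn" where
  "Ssum C r g I = (\<lambda>x. \<Sum>ps\<in>permutations_of_set I. W C r (map g ps) x)"

lemma sum_perm_cons:
  assumes "finite I" "I \<noteq> {}"
  shows "(\<Sum>ps\<in>permutations_of_set I. F ps) = (\<Sum>i\<in>I. \<Sum>ps\<in>permutations_of_set (I - {i}). F (i # ps))"
proof -
  have "(\<Sum>ps\<in>permutations_of_set I. F ps) = (\<Sum>ps\<in>(\<Union>i\<in>I. (#) i ` permutations_of_set (I - {i})). F ps)"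
    by (simp only: permutations_of_set_nonempty[OF assms(2)])
  also have "\<dots> = (\<Sum>i\<in>I. \<Sum>ps\<in>(#) i ` permutations_of_set (I - {i}). F ps)"
    by (rule sum.UNION_disjoint) (use assms(1) in auto)
  also have "\<dots> = (\<Sum>i\<in>I. \<Sum>ps\<in>permutations_of_set (I - {i}). F (i # ps))"
    by (rule sum.cong[OF refl], subst sum.reindex) (auto simp: inj_on_def)
  finally show ?thesis .
qed

context
  fixes P :: "'n::finite fn \<Rightarrow> 'n fn \<Rightarrow> 'n fn" and C
  assumes sp: "star_product P C"
begin

lemma C_bidiff: "bidiff_op (C s)"
  using sp unfolding star_product_def by blast

lemma C0: "smooth f \<Longrightarrow> smooth g \<Longrightarrow> C 0 f g = (\<lambda>x. f x * g x)"
  using sp unfolding star_product_def by blast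

lemma C_const: "r \<ge> 1 \<Longrightarrow> smooth f \<Longrightarrow> C r (\<lambda>x. c) f = (\<lambda>x. 0)"
  using sp unfolding star_product_def by blast

lemma W_smooth: "smooth (W C r ys)"
proof (induction ys arbitrary: r)
  case Nil
  then show ?case by (simp add: W_def)
next
  case (Cons j ys)
  then show ?case unfolding W_def
    by (auto simp: star_def intro!: smooth_sum bidiff_smooth[OF C_bidiff])
qed

lemma W_Cons: "W C r (j # ys) = (\<lambda>x. \<Sum>s\<le>r. C s (\<lambda>x. x $ j) (W C (r - s) ys) x)"
proof -
  have e: "C s (coord_series j t) (W C u ys) x = (if t = 0 then C s (\<lambda>x. x $ j) (W C u ys) x else 0)" for s t u x
    using bidiff_zero_left[OF C_bidiff W_smooth] by (auto simp: coord_series_def)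
  show ?thesis
    unfolding W_def star_list.simps list.map star_def
    using e[unfolded W_def] by (simp add: sum.delta')
qed

lemma W_Cons_split: "W C r (j # ys) = (\<lambda>x. x $ j * W C r ys x + (\<Sum>s\<in>{1..r}. C s (\<lambda>x. x $ j) (W C (r - s) ys) x))"
proof -
  have "{..r} = insert 0 {1..r}" by auto
  then show ?thesis
    unfolding W_Cons by (simp add: C0 W_smooth)
qed

lemma W_0: "W C 0 ys = (\<lambda>x. prod_list (map (\<lambda>i. x $ i) ys))"
proof (induction ys)
  case Nil
  then show ?case by (simp add: W_def one_series_def)
next
  case (Cons j ys)
  have "C 0 (\<lambda>x. x $ j) (W C 0 ys) = (\<lambda>x. x $ j * W C 0 ys x)" by (rule C0) (simp_all add: W_smooth)
  then show ?case unfolding W_Cons using Cons.IH by simp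
qed

lemma W_Nil: "r \<ge> 1 \<Longrightarrow> W C r [] = (\<lambda>x. 0)"
  by (simp add: W_def one_series_def)

lemma Ssum_smooth: "smooth (Ssum C r g I)"
  unfolding Ssum_def by (rule smooth_sum) (rule W_smooth)

lemma B_diff_op: "diff_op (C s (\<lambda>x. x $ j))"
  using bidiff_left_diff_op[OF C_bidiff, of "\<lambda>x. x $ j" s] by simp

lemma Ssum_rec:
  assumes "finite I" "I \<noteq> {}"
  shows "Ssum C r g I = (\<lambda>x. \<Sum>i\<in>I. (x $ g i * Ssum C r g (I - {i}) x +
            (\<Sum>s\<in>{1..r}. C s (\<lambda>x. x $ g i) (Ssum C (r - s) g (I - {i})) x)))"
proof
  fix x
  have "Ssum C r g I x = (\<Sum>i\<in>I. \<Sum>ps\<in>permutations_of_set (I - {i}). W C r (map g (i # ps)) x)"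
    using sum_perm_cons[OF assms, of "\<lambda>ps. W C r (map g ps) x"] unfolding Ssum_def by simp
  also have "\<dots> = (\<Sum>i\<in>I. \<Sum>ps\<in>permutations_of_set (I - {i}).
      (x $ g i * W C r (map g ps) x + (\<Sum>s\<in>{1..r}. C s (\<lambda>x. x $ g i) (W C (r - s) (map g ps)) x)))"
    by (simp add: W_Cons_split)
  also have "\<dots> = (\<Sum>i\<in>I. (x $ g i * Ssum C r g (I - {i}) x +
            (\<Sum>s\<in>{1..r}. C s (\<lambda>x. x $ g i) (Ssum C (r - s) g (I - {i})) x)))"
  proof (rule sum.cong[OF refl])
    fix i assume "i \<in> I"
    have "(\<Sum>ps\<in>permutations_of_set (I - {i}). C s (\<lambda>x. x $ g i) (W C (r - s) (map g ps)) x)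
        = C s (\<lambda>x. x $ g i) (Ssum C (r - s) g (I - {i})) x" for s
    proof -
      have "C s (\<lambda>x. x $ g i) (\<lambda>x. \<Sum>ps\<in>permutations_of_set (I - {i}). 1 * W C (r - s) (map g ps) x)
         = (\<lambda>x. \<Sum>ps\<in>permutations_of_set (I - {i}). 1 * C s (\<lambda>x. x $ g i) (W C (r - s) (map g ps)) x)"
        by (rule diff_op_lin[OF B_diff_op]) (rule W_smooth)
      then show ?thesis unfolding Ssum_def by (simp add: fun_eq_iff)
    qed
    then show "(\<Sum>ps\<in>permutations_of_set (I - {i}).
      (x $ g i * W C r (map g ps) x + (\<Sum>s\<in>{1..r}. C s (\<lambda>x. x $ g i) (W C (r - s) (map g ps)) x))) =
      (x $ g i * Ssum C r g (I - {i}) x +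
            (\<Sum>s\<in>{1..r}. C s (\<lambda>x. x $ g i) (Ssum C (r - s) g (I - {i})) x))"
      unfolding Ssum_def sum.distrib sum_distrib_left by (subst sum.swap) simp
  qed
  finally show "Ssum C r g I x = (\<Sum>i\<in>I. (x $ g i * Ssum C r g (I - {i}) x +
            (\<Sum>s\<in>{1..r}. C s (\<lambda>x. x $ g i) (Ssum C (r - s) g (I - {i})) x)))" .
qed

lemma Ssum_0: "finite I \<Longrightarrow> Ssum C 0 g I = (\<lambda>x. fact (card I) * mon g I x)"
  unfolding Ssum_def W_0 mon_def
proof
  fix x :: "real ^ 'n" assume fin: "finite I"
  have "(\<Sum>ps\<in>permutations_of_set I. prod_list (map (($) x) (map g ps))) =
     (\<Sum>ps\<in>permutations_of_set I. \<Prod>i\<in>I. x $ g i)"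
  proof (rule sum.cong[OF refl])
    fix ps assume "ps \<in> permutations_of_set I"
    then have "set ps = I" "distinct ps" by (auto dest: permutations_of_setD)
    then show "prod_list (map (($) x) (map g ps)) = (\<Prod>i\<in>I. x $ g i)"
      using prod.distinct_set_conv_list[of ps "\<lambda>i. x $ g i"] by (simp add: comp_def)
  qed
  then show "(\<Sum>ps\<in>permutations_of_set I. prod_list (map (($) x) (map g ps))) = fact (card I) * (\<Prod>i\<in>I. x $ g i :: real)"
    using fin by simp
qed

lemma Ssum_empty: "r \<ge> 1 \<Longrightarrow> Ssum C r g {} = (\<lambda>x. 0)"
  unfolding Ssum_def by (simp add: W_Nil)

end



lemma diff_op_zero_map: "diff_op A \<Longrightarrow> A (\<lambda>x. 0) = (\<lambda>x. 0)"
  using diff_op_cmult[of A "\<lambda>x. 0" 0] by simp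

definition Yv where "Yv C r g I = (\<lambda>x. Ssum C r g I x / fact (card I))"

context
  fixes P :: "'n::finite fn \<Rightarrow> 'n fn \<Rightarrow> 'n fn" and C
  assumes sp: "star_product P C"
begin

lemma Yv_smooth: "smooth (Yv C r g I)"
  unfolding Yv_def using smooth_cmult[OF Ssum_smooth[OF sp], of "1 / fact (card I)" r g I]
  by (simp add: field_simps)

lemma main_step:
  assumes r1: "r \<ge> 1"
    and Df: "\<And>r'. r' < r \<Longrightarrow> diff_op (Df r') \<and> (\<forall>g I. finite I \<longrightarrow> Df r' (mon g I) = Yv C r' g I)"
  shows "\<exists>D. diff_op D \<and> (\<forall>g I. finite I \<longrightarrow> D (mon g I) = Yv C r g I)"
proof -
  define E where "E f = (\<lambda>x. \<Sum>s\<in>{1..r}. \<Sum>j\<in>UNIV. C s (\<lambda>x. x $ j) (Df (r - s) (pd j f)) x)" for f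
  have dE: "diff_op E"
    unfolding E_def
  proof (intro diff_op_sum)
    fix s j assume "s \<in> {1..r}"
    then have "diff_op (Df (r - s))" using Df r1 by auto
    then have "diff_op (\<lambda>f. Df (r - s) (pd j f))" by (rule diff_op_comp[OF _ diff_op_pd])
    then show "diff_op (\<lambda>f. C s (\<lambda>x. x $ j) (Df (r - s) (pd j f)))"
      by (rule diff_op_comp[OF B_diff_op[OF sp]])
  qed
  have Emon: "E (mon g I) = (\<lambda>x. \<Sum>i\<in>I. \<Sum>s\<in>{1..r}. C s (\<lambda>x. x $ g i) (Yv C (r - s) g (I - {i})) x)"
    if fin: "finite I" for g I
  proof -
    have "C s (\<lambda>x. x $ j) (Df (r - s) (pd j (mon g I))) =
       (\<lambda>x. \<Sum>i\<in>I. (if g i = j then 1 else 0) * C s (\<lambda>x. x $ j) (Yv C (r - s) g (I - {i})) x)"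
      if "s \<in> {1..r}" for s j
    proof -
      have dD: "diff_op (Df (r - s))" and DY: "\<forall>g I. finite I \<longrightarrow> Df (r - s) (mon g I) = Yv C (r - s) g I"
        using Df r1 that by auto
      have "Df (r - s) (pd j (mon g I)) = (\<lambda>x. \<Sum>i\<in>I. (if g i = j then 1 else 0) * Df (r - s) (mon g (I - {i})) x)"
        unfolding pd_mon[OF fin] by (rule diff_op_lin[OF dD]) simp
      also have "\<dots> = (\<lambda>x. \<Sum>i\<in>I. (if g i = j then 1 else 0) * Yv C (r - s) g (I - {i}) x)"
        using DY fin by simp
      finally show ?thesis
        by (simp only:) (rule diff_op_lin[OF B_diff_op[OF sp]], rule Yv_smooth)
    qed
    then have "E (mon g I) = (\<lambda>x. \<Sum>s\<in>{1..r}. \<Sum>j\<in>UNIV. \<Sum>i\<in>I. (if g i = j then 1 else 0) * C s (\<lambda>x. x $ j) (Yv C (r - s) g (I - {i})) x)"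
      unfolding E_def by (intro ext sum.cong refl) simp
    also have "\<dots> = (\<lambda>x. \<Sum>s\<in>{1..r}. \<Sum>i\<in>I. C s (\<lambda>x. x $ g i) (Yv C (r - s) g (I - {i})) x)"
    proof (intro ext sum.cong refl)
      fix x s i
      show "(\<Sum>j\<in>UNIV. \<Sum>i\<in>I. (if g i = j then 1 else 0) * C s (\<lambda>x. x $ j) (Yv C (r - s) g (I - {i})) x) =
            (\<Sum>i\<in>I. C s (\<lambda>x. x $ g i) (Yv C (r - s) g (I - {i})) x)"
        by (subst sum.swap) (simp add: if_distrib[of "\<lambda>c. c * _"] sum.delta' cong: if_cong)
    qed
    also have "\<dots> = (\<lambda>x. \<Sum>i\<in>I. \<Sum>s\<in>{1..r}. C s (\<lambda>x. x $ g i) (Yv C (r - s) g (I - {i})) x)"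
      by (subst sum.swap) simp
    finally show ?thesis .
  qed
  obtain S e where Srep: "finite S" "\<forall>is\<in>S. smooth (e is)"
    "\<forall>f. smooth f \<longrightarrow> E f = (\<lambda>x. \<Sum>is\<in>S. e is x * iter_pd is f x)"
    using dE unfolding diff_op_def by blast
  have e0: "e [] x = 0" if "[] \<in> S" for x
  proof -
    have "E (\<lambda>x. 1) = (\<lambda>x. 0)"
      unfolding E_def by (simp add: diff_op_zero_map[OF B_diff_op[OF sp]] diff_op_zero_map Df r1)
    moreover have "E (\<lambda>x. 1) x = e [] x"
    proof -
      have "E (\<lambda>x. 1) x = (\<Sum>is\<in>S. e is x * iter_pd is (\<lambda>x. 1) x)" using Srep(3) by simp
      also have "\<dots> = (\<Sum>is\<in>S. if is = [] then e is x else 0)"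
        by (intro sum.cong refl) (simp add: iter_pd_const)
      also have "\<dots> = e [] x" using Srep(1) that by (simp add: sum.delta')
      finally show ?thesis .
    qed
    ultimately show ?thesis by (metis)
  qed
  define d where "d is = (if is = [] then (\<lambda>x. 0) else (\<lambda>x. inverse (real (length is)) * e is x))" for "is"
  define D where "D f = (\<lambda>x. \<Sum>is\<in>S. d is x * iter_pd is f x)" for f
  have dD: "diff_op D"
    unfolding diff_op_def D_def using Srep(1,2)
    by (intro exI[of _ S] exI[of _ d]) (auto simp: d_def intro!: smooth_cmult)
  have Eul: "real (card I) * D (mon g I) x - (\<Sum>i\<in>I. x $ g i * D (mon g (I - {i})) x) = E (mon g I) x"
    if fin: "finite I" for g I x
  proof -
    have "real (card I) * D (mon g I) x - (\<Sum>i\<in>I. x $ g i * D (mon g (I - {i})) x)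
      = (\<Sum>is\<in>S. d is x * (real (card I) * iter_pd is (mon g I) x - (\<Sum>i\<in>I. x $ g i * iter_pd is (mon g (I - {i})) x)))"
      unfolding D_def by (simp add: sum_distrib_left right_diff_distrib sum_subtractf mult_ac sum.swap[of _ I])
    also have "\<dots> = (\<Sum>is\<in>S. d is x * (real (length is) * iter_pd is (mon g I) x))"
    proof (intro sum.cong refl)
      fix "is" :: "'n list"
      show "d is x * (real (card I) * iter_pd is (mon g I) x - (\<Sum>i\<in>I. x $ g i * iter_pd is (mon g (I - {i})) x)) =
            d is x * (real (length is) * iter_pd is (mon g I) x)"
        using fun_cong[OF euler_mon[OF fin, where \<alpha> = "is" and g = g], where x = x] by simp
    qed
    also have "\<dots> = (\<Sum>is\<in>S. e is x * iter_pd is (mon g I) x)"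
      by (intro sum.cong refl) (auto simp: d_def e0)
    also have "\<dots> = E (mon g I) x" using Srep(3) by simp
    finally show ?thesis .
  qed
  have "\<forall>I g. finite I \<and> card I = n \<longrightarrow> D (mon g I) = Yv C r g I" for n
  proof (induction n)
    case 0
    show ?case
    proof (intro allI impI)
      fix I :: "nat set" and g :: "nat \<Rightarrow> 'n" assume "finite I \<and> card I = 0"
      then have I: "I = {}" by auto
      have "D (mon g I) x = 0" for x
      proof -
        have "D (mon g I) x = (\<Sum>is\<in>S. d is x * iter_pd is (\<lambda>x. 1) x)"
          unfolding D_def I mon_def by simp
        also have "\<dots> = 0"
          by (intro sum.neutral) (auto simp: d_def iter_pd_const)
        finally show ?thesis .
      qed
      then show "D (mon g I) = Yv C r g I"
        unfolding I Yv_def using Ssum_empty[OF sp r1] by auto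
    qed
  next
    case (Suc m)
    show ?case
    proof (intro allI impI)
      fix I :: "nat set" and g :: "nat \<Rightarrow> 'n" assume a: "finite I \<and> card I = Suc m"
      then have fin: "finite I" and cI: "card I = Suc m" and ne: "I \<noteq> {}" by auto
      have cI': "card (I - {i}) = m" if "i \<in> I" for i using cI that fin by simp
      have IH: "D (mon g (I - {i})) = Yv C r g (I - {i})" if "i \<in> I" for i
        using Suc.IH cI' that fin by auto
      have Ss: "Ssum C r' g (I - {i}) = (\<lambda>x. fact m * Yv C r' g (I - {i}) x)" if "i \<in> I" for i r'
        unfolding Yv_def using cI'[OF that] by simp
      show "D (mon g I) = Yv C r g I"
      proof
        fix x
        have "fact (Suc m) * Yv C r g I x = Ssum C r g I x"
          unfolding Yv_def cI by simp
        also have "\<dots> = (\<Sum>i\<in>I. (x $ g i * Ssum C r g (I - {i}) x +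
            (\<Sum>s\<in>{1..r}. C s (\<lambda>x. x $ g i) (Ssum C (r - s) g (I - {i})) x)))"
          by (simp add: Ssum_rec[OF sp fin ne])
        also have "\<dots> = (\<Sum>i\<in>I. fact m * (x $ g i * Yv C r g (I - {i}) x +
            (\<Sum>s\<in>{1..r}. C s (\<lambda>x. x $ g i) (Yv C (r - s) g (I - {i})) x)))"
        proof (intro sum.cong refl)
          fix i assume i: "i \<in> I"
          have "C s (\<lambda>x. x $ g i) (Ssum C (r - s) g (I - {i})) x = fact m * C s (\<lambda>x. x $ g i) (Yv C (r - s) g (I - {i})) x" for s
            unfolding Ss[OF i] by (simp add: diff_op_cmult[OF B_diff_op[OF sp] Yv_smooth])
          then show "x $ g i * Ssum C r g (I - {i}) x + (\<Sum>s\<in>{1..r}. C s (\<lambda>x. x $ g i) (Ssum C (r - s) g (I - {i})) x) =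
            fact m * (x $ g i * Yv C r g (I - {i}) x + (\<Sum>s\<in>{1..r}. C s (\<lambda>x. x $ g i) (Yv C (r - s) g (I - {i})) x))"
            by (simp add: Ss[OF i] sum_distrib_left distrib_left)
        qed
        also have "\<dots> = fact m * ((\<Sum>i\<in>I. x $ g i * D (mon g (I - {i})) x) + E (mon g I) x)"
          by (simp add: sum_distrib_left[symmetric] sum.distrib Emon[OF fin] IH)
        also have "\<dots> = fact m * (real (card I) * D (mon g I) x)"
          using Eul[OF fin, of g x] by simp
        also have "\<dots> = fact (Suc m) * D (mon g I) x"
          using cI by (simp add: algebra_simps)
        finally show "D (mon g I) x = Yv C r g I x"
          by (metis fact_nonzero mult_left_cancel)
      qed
    qed
  qed
  then show ?thesis using dD by blast
qed

lemma main: "\<exists>D. diff_op D \<and> (\<forall>g I. finite I \<longrightarrow> D (mon g I) = Yv C r g I)"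
proof (induction r rule: less_induct)
  case (less r)
  show ?case
  proof (cases "r = 0")
    case True
    have "\<forall>g I. finite I \<longrightarrow> mon g I = Yv C r g I"
      using True by (auto simp: Yv_def Ssum_0[OF sp])
    then show ?thesis using diff_op_id by (intro exI[of _ "\<lambda>f. f"]) auto
  next
    case False
    from less have "\<forall>r'. \<exists>D. r' < r \<longrightarrow> diff_op D \<and> (\<forall>g I. finite I \<longrightarrow> D (mon g I) = Yv C r' g I)"
      by blast
    then obtain Df where "\<And>r'. r' < r \<Longrightarrow> diff_op (Df r') \<and> (\<forall>g I. finite I \<longrightarrow> Df r' (mon g I) = Yv C r' g I)"
      by metis
    then show ?thesis using main_step[of r Df] False by auto
  qed
qed

end

lemma mono_mon:
  fixes m :: "'n::finite list"
  shows "mono m = mon (nth m) {..<length m}"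
proof
  fix x :: "real ^ 'n"
  have "mono m x = prod_list (map (\<lambda>i. x $ i) (map (nth m) [0..<length m]))"
    unfolding mono_def by (simp add: map_nth)
  also have "\<dots> = prod_list (map (\<lambda>k. x $ (m ! k)) [0..<length m])"
    by (simp add: comp_def)
  also have "\<dots> = (\<Prod>k\<in>set [0..<length m]. x $ (m ! k))"
    by (rule prod.distinct_set_conv_list[symmetric]) simp
  also have "\<dots> = mon (nth m) {..<length m} x"
    unfolding mon_def by (simp add: atLeast0LessThan)
  finally show "mono m x = mon (nth m) {..<length m} x" .
qed

lemma perm_sum_bij:
  fixes n :: nat
  shows "(\<Sum>\<sigma> | \<sigma> permutes {..<n}. F (map \<sigma> [0..<n])) = (\<Sum>ps\<in>permutations_of_set {..<n}. F ps)"
proof (rule sum.reindex_bij_witness[where j = "\<lambda>\<sigma>. map \<sigma> [0..<n]" and i = "\<lambda>ps k. if k < n then ps ! k else k"])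
  fix \<sigma> assume "\<sigma> \<in> {\<sigma>. \<sigma> permutes {..<n}}"
  then have p: "\<sigma> permutes {..<n}" by simp
  show "(\<lambda>k. if k < n then map \<sigma> [0..<n] ! k else k) = \<sigma>"
    using permutes_not_in[OF p] by (auto simp: fun_eq_iff)
  show "map \<sigma> [0..<n] \<in> permutations_of_set {..<n}"
  proof (rule permutations_of_setI)
    show "set (map \<sigma> [0..<n]) = {..<n}"
      using permutes_image[OF p] by (simp add: atLeast0LessThan)
    show "distinct (map \<sigma> [0..<n])"
      using permutes_inj_on[OF p, of "{..<n}"] by (simp add: distinct_map atLeast0LessThan)
  qed
  show "F (map \<sigma> [0..<n]) = F (map \<sigma> [0..<n])" by simp
next
  fix ps assume ps: "ps \<in> permutations_of_set {..<n}"
  then have st: "set ps = {..<n}" "distinct ps" by (auto dest: permutations_of_setD)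
  have len: "length ps = n"
    using length_finite_permutations_of_set[OF ps] by simp
  show "map (\<lambda>k. if k < n then ps ! k else k) [0..<n] = ps"
    using len by (intro nth_equalityI) auto
  have "bij_betw ((!) ps) {..<n} {..<n}"
    using bij_betw_nth[OF st(2)] len st(1) by simp
  then have "bij_betw (\<lambda>k. if k < n then ps ! k else k) {..<n} {..<n}"
    by (rule bij_betw_cong[THEN iffD1, rotated]) auto
  then show "(\<lambda>k. if k < n then ps ! k else k) \<in> {\<sigma>. \<sigma> permutes {..<n}}"
    by (intro CollectI bij_imp_permutes) auto
qed

lemma rho_Yv:
  fixes C :: "nat \<Rightarrow> 'n::finite fn \<Rightarrow> 'n fn \<Rightarrow> 'n fn"
  shows "rho_mono C m r = Yv C r (nth m) {..<length m}"
proof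
  fix x :: "real ^ 'n"
  have "(\<Sum>\<sigma> | \<sigma> permutes {..<length m}.
          star_list C (map (\<lambda>j. coord_series (m ! \<sigma> j)) [0..<length m]) r x)
      = (\<Sum>\<sigma> | \<sigma> permutes {..<length m}. (\<lambda>ps. W C r (map (nth m) ps) x) (map \<sigma> [0..<length m]))"
    by (simp add: W_def comp_def)
  also have "\<dots> = Ssum C r (nth m) {..<length m} x"
    unfolding Ssum_def by (rule perm_sum_bij)
  finally show "rho_mono C m r x = Yv C r (nth m) {..<length m} x"
    unfolding rho_mono_def Yv_def by simp
qed

theorem theorem2:
  fixes P :: "('n::finite) fn \<Rightarrow> 'n fn \<Rightarrow> 'n fn"
    and C :: "nat \<Rightarrow> 'n fn \<Rightarrow> 'n fn \<Rightarrow> 'n fn"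
  assumes "poisson_bracket P"
    and "star_product P C"
    and "r \<ge> 1"
  shows "\<exists>D. diff_op D \<and> (\<forall>c. D (\<lambda>x. c) = (\<lambda>x. 0)) \<and>
           (\<forall>M (c :: 'n list \<Rightarrow> real). finite M \<longrightarrow>
              D (\<lambda>x. \<Sum>m\<in>M. c m * mono m x) = (\<lambda>x. \<Sum>m\<in>M. c m * rho_mono C m r x))"
proof -
  obtain D where dD: "diff_op D" and DY: "\<And>g I. finite I \<Longrightarrow> D (mon g I) = Yv C r g I"
    using main[OF assms(2), of r] by blast
  have "D (\<lambda>x. c) = (\<lambda>x. 0)" for c
  proof -
    let ?g = "\<lambda>i::nat. undefined :: 'n"
    have "(\<lambda>x::real^'n. c) = (\<lambda>x. c * mon ?g {} x)" by (simp add: mon_def)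
    then have "D (\<lambda>x. c) = (\<lambda>x. c * D (mon ?g {}) x)"
      using diff_op_cmult[OF dD smooth_mon, of c ?g "{}"] by simp
    also have "\<dots> = (\<lambda>x. 0)"
      using DY[of "{}" ?g] Ssum_empty[OF assms(2,3)] by (simp add: Yv_def)
    finally show ?thesis .
  qed
  moreover have "D (\<lambda>x. \<Sum>m\<in>M. c m * mono m x) = (\<lambda>x. \<Sum>m\<in>M. c m * rho_mono C m r x)"
    if "finite M" for M and c :: "'n list \<Rightarrow> real"
  proof -
    have "D (\<lambda>x. \<Sum>m\<in>M. c m * mono m x) = (\<lambda>x. \<Sum>m\<in>M. c m * D (mono m) x)"
      by (rule diff_op_lin[OF dD]) (simp add: mono_mon)
    also have "\<dots> = (\<lambda>x. \<Sum>m\<in>M. c m * rho_mono C m r x)"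
      by (simp add: mono_mon DY rho_Yv)
    finally show ?thesis .
  qed
  ultimately show ?thesis using dD by blast
qed

end
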